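(* Let $k\ge1$ be an integer and $a,b,c,d\ge0$. Then (i) $(0,0)$ is a strict local minimum of $I$ on $H^1(\mathbb{R})\times H^1(\mathbb{R})$; (ii) for every $(u,v)\in\mathcal{N}$, $I(\ell u,\ell v)<0$ for all $\ell>0$ sufficiently large.
   Context: $H(u,v)=\frac{a}{2k+2}(u^{2k+2}+v^{2k+2})+\frac{b}{k+1}(uv)^{k+1}+\frac{c}{k}u^{k+2}v^k+\frac{d}{k}u^kv^{k+2}$; $I(u,v)=\frac12\int(u^2+v^2+u'^2+v'^2)dx-\int H(u,v)dx$; Nehari manifold $\mathcal{N}=\{(u,v)\in H^1\times H^1\setminus\{(0,0)\}: I'(u,v)(u,v)=0\}$. *)

theory Defs
  imports "HOL-Analysis.Analysis"
begin

definition test_fun :: "(real \<Rightarrow> real) \<Rightarrow> bool" where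
  "test_fun \<phi> \<longleftrightarrow> (\<forall>n x. ((deriv ^^ n) \<phi>) differentiable (at x)) \<and>
                   (\<exists>R. \<forall>x. \<bar>x\<bar> > R \<longrightarrow> \<phi> x = 0)"

definition L2 :: "(real \<Rightarrow> real) \<Rightarrow> bool" where
  "L2 u \<longleftrightarrow> u \<in> borel_measurable lborel \<and> integrable lborel (\<lambda>x. (u x)^2)"

definition weak_deriv :: "(real \<Rightarrow> real) \<Rightarrow> (real \<Rightarrow> real) \<Rightarrow> bool" where
  "weak_deriv u g \<longleftrightarrow> (\<forall>\<phi>. test_fun \<phi> \<longrightarrow>
      (LINT x|lborel. u x * deriv \<phi> x) = - (LINT x|lborel. g x * \<phi> x))"

definition H1 :: "(real \<Rightarrow> real) \<Rightarrow> (real \<Rightarrow> real) \<Rightarrow> bool" where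
  "H1 u u' \<longleftrightarrow> L2 u \<and> L2 u' \<and> weak_deriv u u'"

definition H1_norm2 :: "(real \<Rightarrow> real) \<Rightarrow> (real \<Rightarrow> real) \<Rightarrow> (real \<Rightarrow> real) \<Rightarrow> (real \<Rightarrow> real) \<Rightarrow> real" where
  "H1_norm2 u u' v v' = (LINT x|lborel. (u x)^2 + (v x)^2 + (u' x)^2 + (v' x)^2)"

definition Hfun :: "nat \<Rightarrow> real \<Rightarrow> real \<Rightarrow> real \<Rightarrow> real \<Rightarrow> real \<Rightarrow> real \<Rightarrow> real" where
  "Hfun k a b c d u v =
     a / (2 * real k + 2) * (u ^ (2*k+2) + v ^ (2*k+2))
     + b / (real k + 1) * (u * v) ^ (k+1)
     + c / real k * u ^ (k+2) * v ^ k
     + d / real k * u ^ k * v ^ (k+2)"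

definition Ifun :: "nat \<Rightarrow> real \<Rightarrow> real \<Rightarrow> real \<Rightarrow> real \<Rightarrow>
    (real \<Rightarrow> real) \<Rightarrow> (real \<Rightarrow> real) \<Rightarrow> (real \<Rightarrow> real) \<Rightarrow> (real \<Rightarrow> real) \<Rightarrow> real" where
  "Ifun k a b c d u u' v v' =
     1/2 * (LINT x|lborel. (u x)^2 + (v x)^2 + (u' x)^2 + (v' x)^2)
     - (LINT x|lborel. Hfun k a b c d (u x) (v x))"

text \<open>Nehari manifold: (u,v) \<noteq> (0,0) in H^1 x H^1 and I'(u,v)(u,v) = 0, where
  I'(u,v)(u,v) is the directional derivative d/dt I(u + t u, v + t v) at t = 0.\<close>
definition Nehari :: "nat \<Rightarrow> real \<Rightarrow> real \<Rightarrow> real \<Rightarrow> real \<Rightarrow>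
    (real \<Rightarrow> real) \<Rightarrow> (real \<Rightarrow> real) \<Rightarrow> (real \<Rightarrow> real) \<Rightarrow> (real \<Rightarrow> real) \<Rightarrow> bool" where
  "Nehari k a b c d u u' v v' \<longleftrightarrow>
     H1 u u' \<and> H1 v v' \<and> \<not> (AE x in lborel. u x = 0 \<and> v x = 0) \<and>
     ((\<lambda>t. Ifun k a b c d (\<lambda>x. u x + t * u x) (\<lambda>x. u' x + t * u' x)
                          (\<lambda>x. v x + t * v x) (\<lambda>x. v' x + t * v' x))
        has_real_derivative 0) (at 0)"

end

theory Submission
  imports Defs "HOL-Computational_Algebra.Polynomial"
begin


definition hp :: "real poly \<Rightarrow> real \<Rightarrow> real" where
  "hp p y = (if y > 0 then poly p (1/y) * exp (-(1/y)) else 0)"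

definition qp :: "real poly \<Rightarrow> real poly" where
  "qp p = [:0,0,1:] * (p - pderiv p)"

lemma lim_poly_exp: "((\<lambda>t::real. poly p t * exp (-t)) \<longlongrightarrow> 0) at_top"
proof -
  have e: "poly p t * exp (-t) = (\<Sum>i\<le>degree p. coeff p i * (t ^ i / exp t))" for t
    by (simp add: poly_altdef exp_minus divide_inverse sum_distrib_right mult.assoc)
  have "((\<lambda>t. (\<Sum>i\<le>degree p. coeff p i * (t ^ i / exp t))) \<longlongrightarrow> (\<Sum>i\<le>degree p. coeff p i * 0)) at_top"
    by (intro tendsto_sum tendsto_mult tendsto_const tendsto_power_div_exp_0)
  then show ?thesis by (simp add: e)
qed

lemma hp_deriv: "DERIV (hp p) y :> hp (qp p) y"
proof -
  consider "y > 0" | "y < 0" | "y = 0" by linarith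
  then show ?thesis
  proof cases
    case 1
    have "DERIV (\<lambda>y. poly p (1/y) * exp (-(1/y))) y :>
       (poly (pderiv p) (1/y) * (- (1/y^2))) * exp (-(1/y)) + poly p (1/y) * (exp (-(1/y)) * (1/y^2))"
      using 1
      by (auto intro!: derivative_eq_intros DERIV_chain2[OF poly_DERIV] simp: power2_eq_square field_simps)
    moreover have "(poly (pderiv p) (1/y) * (- (1/y^2))) * exp (-(1/y)) + poly p (1/y) * (exp (-(1/y)) * (1/y^2))
       = hp (qp p) y" using 1 by (simp add: hp_def qp_def algebra_simps power2_eq_square)
    ultimately have "DERIV (\<lambda>y. poly p (1/y) * exp (-(1/y))) y :> hp (qp p) y" by simp
    then show ?thesis
      by (rule has_field_derivative_transform_within_open[where S="{0<..}"]) (use 1 in \<open>auto simp: hp_def\<close>)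
  next
    case 2
    have "DERIV (\<lambda>y. 0) y :> hp (qp p) y" using 2 by (simp add: hp_def)
    then show ?thesis
      by (rule has_field_derivative_transform_within_open[where S="{..<0}"]) (use 2 in \<open>auto simp: hp_def\<close>)
  next
    case 3
    have L: "((\<lambda>z. (hp p z - hp p 0) / (z - 0)) \<longlongrightarrow> 0) (at_left 0)"
    proof (rule tendsto_eventually)
      show "\<forall>\<^sub>F z in at_left 0. (hp p z - hp p 0) / (z - 0) = 0"
        by (rule eventually_at_leftI[of "-1"]) (auto simp: hp_def)
    qed
    have R0: "((\<lambda>z. poly (pCons 0 p) (inverse z) * exp (- inverse z)) \<longlongrightarrow> 0) (at_right 0)"
      by (rule filterlim_compose[OF lim_poly_exp filterlim_inverse_at_top_right])
    have R: "((\<lambda>z. (hp p z - hp p 0) / (z - 0)) \<longlongrightarrow> 0) (at_right 0)"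
    proof (rule Lim_transform_eventually[OF R0])
      show "\<forall>\<^sub>F z in at_right 0. poly (pCons 0 p) (inverse z) * exp (- inverse z) = (hp p z - hp p 0) / (z - 0)"
        by (rule eventually_at_rightI[of _ "1"]) (auto simp: hp_def field_simps)
    qed
    have "((\<lambda>z. (hp p z - hp p 0) / (z - 0)) \<longlongrightarrow> 0) (at 0)"
      by (rule filterlim_split_at[OF L R])
    then show ?thesis using 3 by (simp add: has_field_derivative_iff hp_def)
  qed
qed



definition sm :: "(real \<Rightarrow> real) \<Rightarrow> bool" where
  "sm f \<longleftrightarrow> (\<forall>n x. (deriv^^n) f differentiable (at x))"

definition Cn :: "nat \<Rightarrow> (real \<Rightarrow> real) \<Rightarrow> bool" where
  "Cn n f \<longleftrightarrow> (\<forall>m\<le>n. \<forall>x. (deriv^^m) f differentiable (at x))"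

lemma sm_Cn: "sm f \<longleftrightarrow> (\<forall>n. Cn n f)"
  unfolding sm_def Cn_def by blast

lemma deriv_funpow_Suc: "(deriv^^Suc m) f = (deriv^^m) (deriv f)"
  by (simp add: funpow_Suc_right del: funpow.simps)

lemma Cn_0: "Cn 0 f \<longleftrightarrow> (\<forall>x. f differentiable (at x))"
  by (simp add: Cn_def)

lemma Cn_Suc: "Cn (Suc n) f \<longleftrightarrow> (\<forall>x. f differentiable (at x)) \<and> Cn n (deriv f)"
proof
  assume H: "Cn (Suc n) f"
  show "(\<forall>x. f differentiable (at x)) \<and> Cn n (deriv f)"
  proof
    show "\<forall>x. f differentiable (at x)" using H by (auto simp: Cn_def dest: spec[of _ 0])
    show "Cn n (deriv f)" unfolding Cn_def
    proof (intro allI impI)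
      fix m x assume "m \<le> n"
      then have "(deriv^^Suc m) f differentiable (at x)" using H by (auto simp: Cn_def)
      then show "(deriv^^m) (deriv f) differentiable (at x)" by (simp only: deriv_funpow_Suc)
    qed
  qed
next
  assume H: "(\<forall>x. f differentiable (at x)) \<and> Cn n (deriv f)"
  show "Cn (Suc n) f" unfolding Cn_def
  proof (intro allI impI)
    fix m x assume m: "m \<le> Suc n"
    show "(deriv^^m) f differentiable (at x)"
    proof (cases m)
      case 0 then show ?thesis using H by simp
    next
      case (Suc m')
      then have "(deriv^^m') (deriv f) differentiable (at x)" using H m by (auto simp: Cn_def)
      then show ?thesis using Suc by (simp only: deriv_funpow_Suc)
    qed
  qed
qed

lemma sm_iff: "sm f \<longleftrightarrow> (\<forall>x. f differentiable (at x)) \<and> sm (deriv f)"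
proof
  assume "sm f"
  then have "\<forall>n. Cn (Suc n) f" by (simp add: sm_Cn)
  then show "(\<forall>x. f differentiable (at x)) \<and> sm (deriv f)"
    unfolding Cn_Suc sm_Cn by blast
next
  assume H: "(\<forall>x. f differentiable (at x)) \<and> sm (deriv f)"
  have "Cn n f" for n
  proof (cases n)
    case 0 then show ?thesis using H Cn_0 by blast
  next
    case (Suc m) then show ?thesis using H Cn_Suc sm_Cn by blast
  qed
  then show "sm f" by (simp add: sm_Cn)
qed

lemma diff_DERIV: fixes f :: "real \<Rightarrow> real" shows "f differentiable (at x) \<Longrightarrow> DERIV f x :> deriv f x"
  by (simp add: DERIV_deriv_iff_real_differentiable)

lemma sm_hp: "sm (hp p)"
proof -
  have d: "deriv (hp p) = hp (qp p)" for p
    by (rule ext, rule DERIV_imp_deriv, rule hp_deriv)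
  have "\<forall>p x. (deriv^^n) (hp p) differentiable (at x)" for n
  proof (induction n)
    case 0 then show ?case using hp_deriv real_differentiable_def by auto
  next
    case (Suc n) then show ?case by (simp add: deriv_funpow_Suc d del: funpow.simps)
  qed
  then show ?thesis by (simp add: sm_def)
qed

lemma Cn_mono: "m \<le> n \<Longrightarrow> Cn n f \<Longrightarrow> Cn m f"
  by (auto simp: Cn_def)

lemma Cn_add: "Cn n f \<Longrightarrow> Cn n g \<Longrightarrow> Cn n (\<lambda>x. f x + g x)"
proof (induction n arbitrary: f g)
  case 0 then show ?case by (auto simp: Cn_0)
next
  case (Suc n)
  have df: "\<forall>x. f differentiable (at x)" and dg: "\<forall>x. g differentiable (at x)"
    using Suc.prems by (auto simp: Cn_Suc)
  have e: "deriv (\<lambda>x. f x + g x) = (\<lambda>x. deriv f x + deriv g x)"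
    by (rule ext, rule DERIV_imp_deriv, intro DERIV_add diff_DERIV) (use df dg in auto)
  show ?case unfolding Cn_Suc e
    using Suc df dg by (auto simp: Cn_Suc)
qed

lemma Cn_cmul: "Cn n f \<Longrightarrow> Cn n (\<lambda>x. c * f x)"
proof (induction n arbitrary: f)
  case 0 then show ?case by (auto simp: Cn_0)
next
  case (Suc n)
  have df: "\<forall>x. f differentiable (at x)"
    using Suc.prems by (auto simp: Cn_Suc)
  have e: "deriv (\<lambda>x. c * f x) = (\<lambda>x. c * deriv f x)"
    by (rule ext, rule DERIV_imp_deriv, intro DERIV_cmult diff_DERIV) (use df in auto)
  show ?case unfolding Cn_Suc e
    using Suc df by (auto simp: Cn_Suc)
qed

lemma Cn_mult: "Cn n f \<Longrightarrow> Cn n g \<Longrightarrow> Cn n (\<lambda>x. f x * g x)"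
proof (induction n arbitrary: f g)
  case 0 then show ?case by (auto simp: Cn_0)
next
  case (Suc n)
  have df: "\<forall>x. f differentiable (at x)" and dg: "\<forall>x. g differentiable (at x)"
    and cf: "Cn n (deriv f)" and cg: "Cn n (deriv g)"
    using Suc.prems by (auto simp: Cn_Suc)
  have f': "Cn n f" "Cn n g" using Suc.prems Cn_mono[of n "Suc n"] by auto
  have e: "deriv (\<lambda>x. f x * g x) = (\<lambda>x. deriv f x * g x + deriv g x * f x)"
    by (rule ext, rule DERIV_imp_deriv, intro DERIV_mult diff_DERIV) (use df dg in auto)
  have "\<forall>x. (\<lambda>x. f x * g x) differentiable (at x)"
    using DERIV_mult[OF diff_DERIV diff_DERIV] df dg real_differentiable_def by blast
  moreover have "Cn n (\<lambda>x. deriv f x * g x + deriv g x * f x)"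
    by (rule Cn_add[OF Suc.IH[OF cf f'(2)] Suc.IH[OF cg f'(1)]])
  ultimately show ?case unfolding Cn_Suc e by (rule conjI)
qed

lemma Cn_aff: "Cn n f \<Longrightarrow> Cn n (\<lambda>x. f (m * x + c))"
proof (induction n arbitrary: f)
  case 0
  have "DERIV (\<lambda>x. f (m * x + c)) x :> deriv f (m * x + c) * m" for x
    by (rule DERIV_chain2[OF diff_DERIV]) (use 0 in \<open>auto simp: Cn_0 intro!: derivative_eq_intros\<close>)
  then show ?case unfolding Cn_0 real_differentiable_def by blast
next
  case (Suc n)
  have df: "\<forall>x. f differentiable (at x)" and cf: "Cn n (deriv f)"
    using Suc.prems by (auto simp: Cn_Suc)
  have D: "DERIV (\<lambda>x. f (m * x + c)) x :> deriv f (m * x + c) * m" for x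
    by (rule DERIV_chain2[OF diff_DERIV]) (use df in \<open>auto intro!: derivative_eq_intros\<close>)
  have e: "deriv (\<lambda>x. f (m * x + c)) = (\<lambda>x. m * deriv f (m * x + c))"
    by (rule ext, rule DERIV_imp_deriv) (use D in \<open>simp add: mult.commute\<close>)
  have "\<forall>x. (\<lambda>x. f (m * x + c)) differentiable (at x)"
    using D real_differentiable_def by blast
  moreover have "Cn n (\<lambda>x. m * deriv f (m * x + c))"
    by (rule Cn_cmul[OF Suc.IH[OF cf]])
  ultimately show ?case unfolding Cn_Suc e by (rule conjI)
qed

lemma sm_add: "sm f \<Longrightarrow> sm g \<Longrightarrow> sm (\<lambda>x. f x + g x)"
  unfolding sm_Cn using Cn_add by blast
lemma sm_cmul: "sm f \<Longrightarrow> sm (\<lambda>x. c * f x)"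
  unfolding sm_Cn using Cn_cmul by blast
lemma sm_mult: "sm f \<Longrightarrow> sm g \<Longrightarrow> sm (\<lambda>x. f x * g x)"
  unfolding sm_Cn using Cn_mult by blast
lemma sm_aff: "sm f \<Longrightarrow> sm (\<lambda>x. f (m * x + c))"
  unfolding sm_Cn using Cn_aff by blast
lemma sm_diff: "sm f \<Longrightarrow> sm g \<Longrightarrow> sm (\<lambda>x. f x - g x)"
  using sm_add[of f "\<lambda>x. (-1) * g x"] sm_cmul[of g "-1"] by simp

lemma sm_differentiable: "sm f \<Longrightarrow> f differentiable (at x)"
  using sm_iff by blast

lemma sm_cont: "sm f \<Longrightarrow> continuous_on UNIV f"
  by (intro continuous_at_imp_continuous_on ballI differentiable_imp_continuous_within sm_differentiable)



lemma antideriv: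
  fixes p :: "real \<Rightarrow> real"
  assumes cont: "continuous_on UNIV p" and z: "\<And>y. y \<le> 0 \<Longrightarrow> p y = 0"
  shows "\<exists>G. (\<forall>x. DERIV G x :> p x) \<and> (\<forall>y\<le>0. G y = 0)"
proof -
  define G where "G z = integral {-1..z} p" for z
  have G0: "G w = 0" if "w \<le> 0" for w
  proof -
    have "(p has_integral 0) {-1..w}"
      by (rule has_integral_is_0) (use that z in auto)
    then show ?thesis unfolding G_def by (rule integral_unique)
  qed
  have D: "DERIV G x :> p x" for x
  proof (cases "x < 0")
    case True
    have "p x = 0" using True z[of x] by linarith
    then have "DERIV (\<lambda>_. 0) x :> p x" by (simp only: DERIV_const)
    then show ?thesis
    proof (rule has_field_derivative_transform_within_open[where S="{..<0}"])
      show "open {..<(0::real)}" by simp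
      show "x \<in> {..<0}" using True by simp
      fix y :: real assume "y \<in> {..<0}"
      then show "0 = G y" using G0[of y] by simp
    qed
  next
    case False
    have "(G has_real_derivative p x) (at x within {-1..x+1})"
      unfolding G_def
    proof (rule integral_has_real_derivative)
      show "continuous_on {-1..x+1} p" by (rule continuous_on_subset[OF cont]) simp
      show "x \<in> {-1..x+1}" using False by simp
    qed
    moreover have "x \<in> interior {-1..x+1}" using False by simp
    ultimately show ?thesis using at_within_interior[of x "{-1..x+1}"] by metis
  qed
  show ?thesis
    by (rule exI[of _ G]) (use D G0 in simp)
qed

lemma mvt_bounds:
  fixes G p :: "real \<Rightarrow> real"
  assumes "z \<le> y" and D: "\<And>x. DERIV G x :> p x"
    and b: "\<And>x. z \<le> x \<Longrightarrow> x \<le> y \<Longrightarrow> lo \<le> p x \<and> p x \<le> hi"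
  shows "lo * (y - z) \<le> G y - G z \<and> G y - G z \<le> hi * (y - z)"
proof (cases "z = y")
  case True then show ?thesis by simp
next
  case False
  then have "z < y" using assms by simp
  from MVT2[OF this D] obtain \<xi> where \<xi>: "z < \<xi>" "\<xi> < y" "G y - G z = (y - z) * p \<xi>" by blast
  have "lo \<le> p \<xi>" "p \<xi> \<le> hi" using b \<xi> by force+
  then show ?thesis using \<xi> \<open>z < y\<close>
    by (simp add: mult.commute mult_left_mono)
qed

definition fb :: "real \<Rightarrow> real" where "fb = hp 1"

lemma fb_simps: "y \<le> 0 \<Longrightarrow> fb y = 0" "y > 0 \<Longrightarrow> fb y > 0"
  by (auto simp: fb_def hp_def)

definition psi :: "real \<Rightarrow> real" where "psi t = fb t * fb (1 - t)"

lemma sm_psi: "sm psi"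
proof -
  have a: "sm fb" by (simp add: fb_def sm_hp)
  have b: "sm (\<lambda>t. fb ((-1) * t + 1))" by (rule sm_aff[OF a])
  have "sm (\<lambda>t. fb t * fb ((-1) * t + 1))" by (rule sm_mult[OF a b])
  then show ?thesis by (simp add: psi_def[abs_def])
qed

lemma psi_zero: "t \<le> 0 \<or> t \<ge> 1 \<Longrightarrow> psi t = 0"
  by (auto simp: psi_def fb_simps)

lemma psi_pos: "0 < t \<Longrightarrow> t < 1 \<Longrightarrow> psi t > 0"
  by (auto simp: psi_def fb_simps)

lemma psi_nonneg: "psi t \<ge> 0"
proof (cases "0 < t \<and> t < 1")
  case True then show ?thesis using psi_pos[of t] by simp
next
  case False then have "t \<le> 0 \<or> 1 \<le> t" by auto
  then show ?thesis using psi_zero[of t] by simp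
qed

definition Fp :: "real \<Rightarrow> real" where
  "Fp = (SOME G. (\<forall>x. DERIV G x :> psi x) \<and> (\<forall>y\<le>0. G y = 0))"

lemma Fp: "\<And>x. DERIV Fp x :> psi x" "\<And>y. y \<le> 0 \<Longrightarrow> Fp y = 0"
proof -
  have "\<exists>G. (\<forall>x. DERIV G x :> psi x) \<and> (\<forall>y\<le>0. G y = 0)"
    by (rule antideriv[OF sm_cont[OF sm_psi]]) (simp add: psi_zero)
  then have "(\<forall>x. DERIV Fp x :> psi x) \<and> (\<forall>y\<le>0. Fp y = 0)"
    unfolding Fp_def by (rule someI_ex)
  then show "\<And>x. DERIV Fp x :> psi x" "\<And>y. y \<le> 0 \<Longrightarrow> Fp y = 0" by auto
qed

lemma Fp1_pos: "Fp 1 > 0"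
proof -
  from MVT2[of 0 1 Fp psi] Fp obtain \<xi> where "0 < \<xi>" "\<xi> < 1" "Fp 1 - Fp 0 = psi \<xi>"
    by auto
  then show ?thesis using psi_pos Fp(2)[of 0] by auto
qed

lemma Fp_ge1: assumes "y \<ge> 1" shows "Fp y = Fp 1"
proof -
  have "0 * (y - 1) \<le> Fp y - Fp 1 \<and> Fp y - Fp 1 \<le> 0 * (y - 1)"
    by (rule mvt_bounds[OF assms Fp(1)]) (simp add: psi_zero)
  then show ?thesis by simp
qed

lemma Fp_mono: assumes "z \<le> y" shows "Fp z \<le> Fp y"
proof (cases "z = y")
  case False
  then have "z < y" using assms by simp
  from MVT2[OF this Fp(1)] obtain \<xi> where "Fp y - Fp z = (y - z) * psi \<xi>" by blast
  moreover have "0 \<le> (y - z) * psi \<xi>" using assms psi_nonneg by simp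
  ultimately show ?thesis by simp
qed simp

definition St :: "real \<Rightarrow> real" where "St y = Fp y / Fp 1"

lemma St_deriv: "DERIV St x :> psi x / Fp 1"
  unfolding St_def[abs_def] by (rule DERIV_cdivide[OF Fp(1)])

lemma sm_St: "sm St"
proof -
  have d: "deriv St = (\<lambda>x. (1 / Fp 1) * psi x)"
    by (rule ext, rule DERIV_imp_deriv) (use St_deriv in simp)
  have "\<forall>x. St differentiable (at x)"
    using St_deriv real_differentiable_def by blast
  moreover have "sm (deriv St)" unfolding d by (rule sm_cmul[OF sm_psi])
  ultimately show ?thesis using sm_iff[of St] by blast
qed

lemma St_0: "y \<le> 0 \<Longrightarrow> St y = 0"
  using Fp(2)[of y] by (simp add: St_def)

lemma St_1: "y \<ge> 1 \<Longrightarrow> St y = 1"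
  using Fp1_pos Fp_ge1[of y] by (simp add: St_def)

lemma St_bounds: "0 \<le> St y" "St y \<le> 1"
proof -
  have "0 \<le> Fp y"
    using Fp_mono[of 0 y] Fp(2)[of y] Fp(2)[of 0] by (cases "y \<le> 0") auto
  moreover have "Fp y \<le> Fp 1"
    using Fp_mono[of y 1] Fp_ge1[of y] by (cases "y \<le> 1") auto
  ultimately show "0 \<le> St y" "St y \<le> 1" using Fp1_pos by (auto simp: St_def)
qed

definition Sg :: "real \<Rightarrow> real" where
  "Sg = (SOME G. (\<forall>x. DERIV G x :> St x) \<and> (\<forall>y\<le>0. G y = 0))"

lemma Sg: "\<And>x. DERIV Sg x :> St x" "\<And>y. y \<le> 0 \<Longrightarrow> Sg y = 0"
proof -
  have "\<exists>G. (\<forall>x. DERIV G x :> St x) \<and> (\<forall>y\<le>0. G y = 0)"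
    by (rule antideriv[OF sm_cont[OF sm_St]]) (simp add: St_0)
  then have "(\<forall>x. DERIV Sg x :> St x) \<and> (\<forall>y\<le>0. Sg y = 0)"
    unfolding Sg_def by (rule someI_ex)
  then show "\<And>x. DERIV Sg x :> St x" "\<And>y. y \<le> 0 \<Longrightarrow> Sg y = 0" by auto
qed

lemma sm_Sg: "sm Sg"
proof -
  have d: "deriv Sg = St"
    by (rule ext, rule DERIV_imp_deriv, rule Sg(1))
  have "\<forall>x. Sg differentiable (at x)"
    using Sg(1) real_differentiable_def by blast
  moreover have "sm (deriv Sg)" unfolding d by (rule sm_St)
  ultimately show ?thesis using sm_iff[of Sg] by blast
qed

lemma Sg_lip: assumes "z \<le> y" shows "0 \<le> Sg y - Sg z \<and> Sg y - Sg z \<le> y - z"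
proof -
  have "0 * (y - z) \<le> Sg y - Sg z \<and> Sg y - Sg z \<le> 1 * (y - z)"
    by (rule mvt_bounds[OF assms Sg(1)]) (simp add: St_bounds)
  then show ?thesis by simp
qed

lemma Sg_ge1: assumes "y \<ge> 1" shows "Sg y = Sg 1 + (y - 1)"
proof -
  have "1 * (y - 1) \<le> Sg y - Sg 1 \<and> Sg y - Sg 1 \<le> 1 * (y - 1)"
    by (rule mvt_bounds[OF assms Sg(1)]) (simp add: St_1)
  then show ?thesis by simp
qed



lemma cont_meas: "continuous_on UNIV f \<Longrightarrow> (f::real\<Rightarrow>real) \<in> borel_measurable lborel"
  by (simp add: borel_measurable_continuous_onI)

lemma L2_loc_abs:
  assumes "L2 f"
  shows "integrable lborel (\<lambda>x. indicator {c..d} x * \<bar>f x\<bar>)"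
proof (rule Bochner_Integration.integrable_bound)
  have "integrable lborel (indicator {c..d} :: real \<Rightarrow> real)"
  proof (rule integrable_real_indicator)
    show "emeasure lborel {c..d} < \<infinity>"
    proof (cases "c \<le> d")
      case True then show ?thesis by (simp add: emeasure_lborel_Icc)
    next
      case False then have "{c..d} = {}" by auto
      then show ?thesis by simp
    qed
  qed simp
  then show "integrable lborel (\<lambda>x. (f x)^2 + indicator {c..d} x)"
    using assms by (intro Bochner_Integration.integrable_add) (auto simp: L2_def)
  show "(\<lambda>x. indicator {c..d} x * \<bar>f x\<bar>) \<in> borel_measurable lborel"
    using assms by (auto simp: L2_def)
  show "AE x in lborel. norm (indicator {c..d} x * \<bar>f x\<bar>) \<le> norm ((f x)^2 + indicator {c..d} x)"
  proof (rule AE_I2)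
    fix x
    have "\<bar>f x\<bar> \<le> (f x)^2 + 1"
    proof (cases "\<bar>f x\<bar> \<le> 1")
      case True then show ?thesis using zero_le_power2[of "f x"] by linarith
    next
      case False
      then have "\<bar>f x\<bar> * 1 \<le> \<bar>f x\<bar> * \<bar>f x\<bar>" by (intro mult_left_mono) auto
      moreover have "(f x)^2 = \<bar>f x\<bar> * \<bar>f x\<bar>" by (simp add: power2_eq_square)
      ultimately show ?thesis by linarith
    qed
    then show "norm (indicator {c..d} x * \<bar>f x\<bar>) \<le> norm ((f x)^2 + indicator {c..d} x)"
      using zero_le_power2[of "f x"] by (cases "x \<in> {c..d}") (simp_all del: atLeastAtMost_iff)
  qed
qed

lemma L2_loc:
  assumes "L2 f"
  shows "integrable lborel (\<lambda>x. indicator {c..d} x * f x)"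
proof (rule Bochner_Integration.integrable_bound[OF L2_loc_abs[OF assms, of c d]])
  show "(\<lambda>x. indicator {c..d} x * f x) \<in> borel_measurable lborel"
    using assms by (auto simp: L2_def)
  show "AE x in lborel. norm (indicator {c..d} x * f x) \<le> norm (indicator {c..d} x * \<bar>f x\<bar>)"
    by (rule AE_I2) (simp add: abs_mult)
qed

definition R :: "real \<Rightarrow> real \<Rightarrow> real \<Rightarrow> real \<Rightarrow> real" where
  "R N h \<alpha> x = (1 / (h * N)) * (Sg (N * x + (- N * \<alpha>)) - Sg (N * x + (- N * \<alpha> - N * h)))"

definition dR :: "real \<Rightarrow> real \<Rightarrow> real \<Rightarrow> real \<Rightarrow> real" where
  "dR N h \<alpha> x = (1 / h) * (St (N * x + (- N * \<alpha>)) - St (N * x + (- N * \<alpha> - N * h)))"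

lemma sm_R: "sm (R N h \<alpha>)"
proof -
  have "sm (\<lambda>x. (1 / (h * N)) * (Sg (N * x + (- N * \<alpha>)) - Sg (N * x + (- N * \<alpha> - N * h))))"
    by (intro sm_cmul sm_diff sm_aff sm_Sg)
  then show ?thesis by (simp add: R_def[abs_def])
qed

lemma R_deriv:
  assumes "N > 0" "h > 0"
  shows "DERIV (R N h \<alpha>) x :> dR N h \<alpha> x"
proof -
  have "DERIV (\<lambda>x. (1 / (h * N)) * (Sg (N * x + (- N * \<alpha>)) - Sg (N * x + (- N * \<alpha> - N * h)))) x :>
        (1 / (h * N)) * (St (N * x + (- N * \<alpha>)) * N - St (N * x + (- N * \<alpha> - N * h)) * N)"
    by (intro DERIV_cmult DERIV_diff DERIV_chain2[OF Sg(1)]) (auto intro!: derivative_eq_intros)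
  moreover have "(1 / (h * N)) * (St (N * x + (- N * \<alpha>)) * N - St (N * x + (- N * \<alpha> - N * h)) * N)
     = dR N h \<alpha> x" using assms by (simp add: dR_def field_simps)
  ultimately show ?thesis by (simp add: R_def[abs_def])
qed

lemma cont_dR: "continuous_on UNIV (dR N h \<alpha>)"
proof -
  have c1: "continuous_on UNIV (\<lambda>x. St (N * x + (- N * \<alpha>)))" by (rule sm_cont[OF sm_aff[OF sm_St]])
  have c2: "continuous_on UNIV (\<lambda>x. St (N * x + (- N * \<alpha> - N * h)))" by (rule sm_cont[OF sm_aff[OF sm_St]])
  have "continuous_on UNIV (\<lambda>x. (1 / h) * (St (N * x + (- N * \<alpha>)) - St (N * x + (- N * \<alpha> - N * h))))"
    by (intro continuous_on_mult continuous_on_const continuous_on_diff c1 c2)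
  then show ?thesis by (simp add: dR_def[abs_def])
qed

lemma R_bounds:
  assumes "N > 0" "h > 0"
  shows "0 \<le> R N h \<alpha> x" "R N h \<alpha> x \<le> 1"
proof -
  let ?y = "N * x + (- N * \<alpha>)"
  have e: "N * x + (- N * \<alpha> - N * h) = ?y - N * h" by simp
  have "0 \<le> Sg ?y - Sg (?y - N * h) \<and> Sg ?y - Sg (?y - N * h) \<le> ?y - (?y - N * h)"
    by (rule Sg_lip) (use assms in simp)
  moreover have "h * N = N * h" by simp
  ultimately have "0 \<le> Sg ?y - Sg (?y - N * h)" "Sg ?y - Sg (?y - N * h) \<le> h * N" by linarith+
  then show "0 \<le> R N h \<alpha> x" "R N h \<alpha> x \<le> 1"
    unfolding R_def e using assms by (auto simp: field_simps)
qed

lemma R_left: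
  assumes "N > 0" "h > 0" "x \<le> \<alpha>"
  shows "R N h \<alpha> x = 0"
proof -
  have p: "N * (x - \<alpha>) \<le> 0" using assms by (intro mult_nonneg_nonpos) auto
  have q: "N * h > 0" using assms by simp
  have "N * x + (- N * \<alpha>) = N * (x - \<alpha>)" "N * x + (- N * \<alpha> - N * h) = N * (x - \<alpha>) - N * h"
    by (simp_all add: algebra_simps)
  then have "N * x + (- N * \<alpha>) \<le> 0" "N * x + (- N * \<alpha> - N * h) \<le> 0"
    using p q by linarith+
  then show ?thesis unfolding R_def using Sg(2)[of "N * x + (- N * \<alpha>)"] Sg(2)[of "N * x + (- N * \<alpha> - N * h)"] by simp
qed

lemma R_right:
  assumes "N > 0" "h > 0" "x \<ge> \<alpha> + h + 1 / N"
  shows "R N h \<alpha> x = 1"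
proof -
  have "N * (x - \<alpha> - h) \<ge> N * (1 / N)" using assms by (intro mult_left_mono) auto
  moreover have "N * (1 / N) = 1" using assms by simp
  moreover have "N * x + (- N * \<alpha> - N * h) = N * (x - \<alpha> - h)" by (simp add: algebra_simps)
  ultimately have a: "N * x + (- N * \<alpha> - N * h) \<ge> 1" by linarith
  have q: "N * h > 0" using assms by simp
  have "N * x + (- N * \<alpha>) = N * x + (- N * \<alpha> - N * h) + N * h" by simp
  then have b: "N * x + (- N * \<alpha>) \<ge> 1" using a q by linarith
  have "Sg (N * x + (- N * \<alpha>)) - Sg (N * x + (- N * \<alpha> - N * h)) = N * h"
    using Sg_ge1[OF a] Sg_ge1[OF b] by simp
  then show ?thesis unfolding R_def using assms by simp
qed

lemma dR_bound:
  assumes "h > 0"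
  shows "\<bar>dR N h \<alpha> x\<bar> \<le> 1 / h"
proof -
  have "\<bar>St (N * x + (- N * \<alpha>)) - St (N * x + (- N * \<alpha> - N * h))\<bar> \<le> 1"
    using St_bounds[of "N * x + (- N * \<alpha>)"] St_bounds[of "N * x + (- N * \<alpha> - N * h)"] by linarith
  then show ?thesis unfolding dR_def using assms by (simp add: abs_mult divide_le_cancel)
qed

lemma dR_left:
  assumes "N > 0" "h > 0" "x \<le> \<alpha>"
  shows "dR N h \<alpha> x = 0"
proof -
  have p: "N * (x - \<alpha>) \<le> 0" using assms by (intro mult_nonneg_nonpos) auto
  have q: "N * h > 0" using assms by simp
  have "N * x + (- N * \<alpha>) = N * (x - \<alpha>)" "N * x + (- N * \<alpha> - N * h) = N * (x - \<alpha>) - N * h"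
    by (simp_all add: algebra_simps)
  then have "N * x + (- N * \<alpha>) \<le> 0" "N * x + (- N * \<alpha> - N * h) \<le> 0"
    using p q by linarith+
  then show ?thesis unfolding dR_def using St_0[of "N * x + (- N * \<alpha>)"] St_0[of "N * x + (- N * \<alpha> - N * h)"] by simp
qed

lemma dR_right:
  assumes "N > 0" "h > 0" "x \<ge> \<alpha> + h + 1 / N"
  shows "dR N h \<alpha> x = 0"
proof -
  have "N * (x - \<alpha> - h) \<ge> N * (1 / N)" using assms by (intro mult_left_mono) auto
  moreover have "N * (1 / N) = 1" using assms by simp
  moreover have "N * x + (- N * \<alpha> - N * h) = N * (x - \<alpha> - h)" by (simp add: algebra_simps)
  ultimately have a: "N * x + (- N * \<alpha> - N * h) \<ge> 1" by linarith
  have q: "N * h > 0" using assms by simp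
  have "N * x + (- N * \<alpha>) = N * x + (- N * \<alpha> - N * h) + N * h" by simp
  then have b: "N * x + (- N * \<alpha>) \<ge> 1" using a q by linarith
  show ?thesis unfolding dR_def using St_1[OF a] St_1[OF b] by simp
qed

lemma St_lim: "(\<lambda>i. St (real (Suc i) * y)) \<longlonglongrightarrow> (if y > 0 then 1 else 0)"
proof (cases "y > 0")
  case True
  have "\<forall>\<^sub>F i in sequentially. St (real (Suc i) * y) = 1"
  proof (rule eventually_sequentiallyI[of "nat \<lceil>1 / y\<rceil>"])
    fix i assume "nat \<lceil>1 / y\<rceil> \<le> i"
    then have "1 / y \<le> real (Suc i)" by linarith
    then have "1 \<le> real (Suc i) * y" using True by (simp add: field_simps)
    then show "St (real (Suc i) * y) = 1" by (rule St_1)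
  qed
  then show ?thesis using True by (simp add: tendsto_eventually)
next
  case False
  then have "St (real (Suc i) * y) = 0" for i
    by (intro St_0) (simp add: mult_nonneg_nonpos)
  then show ?thesis using False by simp
qed

lemma dR_lim:
  assumes "h > 0" "x \<noteq> \<alpha>"
  shows "(\<lambda>i. dR (real (Suc i)) h \<alpha> x) \<longlonglongrightarrow> indicator {\<alpha>..\<alpha>+h} x / h"
proof -
  have e: "dR (real (Suc i)) h \<alpha> x = (1/h) * (St (real (Suc i) * (x - \<alpha>)) - St (real (Suc i) * (x - \<alpha> - h)))" for i
    unfolding dR_def by (simp add: algebra_simps)
  have lim: "(\<lambda>i. (1/h) * (St (real (Suc i) * (x - \<alpha>)) - St (real (Suc i) * (x - \<alpha> - h)))) \<longlonglongrightarrow>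
        (1/h) * ((if x - \<alpha> > 0 then 1 else 0) - (if x - \<alpha> - h > 0 then 1 else 0))"
    by (intro tendsto_mult tendsto_const tendsto_diff St_lim)
  moreover have eq: "(1/h) * ((if x - \<alpha> > 0 then 1 else 0) - (if x - \<alpha> - h > 0 then 1 else 0)) = indicator {\<alpha>..\<alpha>+h} x / h"
    using assms by (auto simp: indicator_def)
  show ?thesis unfolding e using lim unfolding eq .
qed



lemma lim_u:
  assumes "L2 u" "0 < h" "h \<le> 1"
  shows "\<And>i. integrable lborel (\<lambda>x. u x * dR (real (Suc i)) h \<alpha> x)"
    and "(\<lambda>i. LINT x|lborel. u x * dR (real (Suc i)) h \<alpha> x) \<longlonglongrightarrow> (LINT x|lborel. indicator {\<alpha>..\<alpha>+h} x * u x / h)"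
proof -
  have um[measurable]: "u \<in> borel_measurable lborel" using assms by (simp add: L2_def)
  have dm[measurable]: "dR N h \<alpha> \<in> borel_measurable lborel" for N by (rule cont_meas[OF cont_dR])
  define w where "w x = (1/h) * (indicator {\<alpha>..\<alpha>+2} x * \<bar>u x\<bar>)" for x
  have wi: "integrable lborel w"
    unfolding w_def by (intro integrable_mult_right L2_loc_abs assms)
  have fm: "(\<lambda>x. indicator {\<alpha>..\<alpha>+h} x * u x / h) \<in> borel_measurable lborel" by measurable
  have sm: "(\<lambda>x. u x * dR (real (Suc i)) h \<alpha> x) \<in> borel_measurable lborel" for i by measurable
  have lim: "AE x in lborel. (\<lambda>i. u x * dR (real (Suc i)) h \<alpha> x) \<longlonglongrightarrow> indicator {\<alpha>..\<alpha>+h} x * u x / h"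
    using AE_lborel_singleton[of \<alpha>]
  proof eventually_elim
    case (elim x)
    have "(\<lambda>i. u x * dR (real (Suc i)) h \<alpha> x) \<longlonglongrightarrow> u x * (indicator {\<alpha>..\<alpha>+h} x / h)"
      by (intro tendsto_mult_left dR_lim) (use assms elim in auto)
    then show ?case by (simp add: mult.commute)
  qed
  have bound: "AE x in lborel. norm (u x * dR (real (Suc i)) h \<alpha> x) \<le> w x" for i
  proof (rule AE_I2)
    fix x
    let ?N = "real (Suc i)"
    have N: "?N > 0" "1 / ?N \<le> 1" by auto
    show "norm (u x * dR ?N h \<alpha> x) \<le> w x"
    proof (cases "x \<in> {\<alpha>..\<alpha>+2}")
      case True
      have "\<bar>u x\<bar> * \<bar>dR ?N h \<alpha> x\<bar> \<le> \<bar>u x\<bar> * (1 / h)"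
        by (intro mult_left_mono dR_bound assms) simp
      then show ?thesis using True by (simp add: w_def abs_mult)
    next
      case False
      then have "x < \<alpha> \<or> x > \<alpha> + 2" by auto
      then have "dR ?N h \<alpha> x = 0"
      proof
        assume "x < \<alpha>" then show ?thesis using dR_left[OF N(1) assms(2)] by simp
      next
        assume "x > \<alpha> + 2"
        then have "x \<ge> \<alpha> + h + 1 / ?N" using N assms by linarith
        then show ?thesis using dR_right[OF N(1) assms(2)] by simp
      qed
      then show ?thesis using False by (simp add: w_def)
    qed
  qed
  show "\<And>i. integrable lborel (\<lambda>x. u x * dR (real (Suc i)) h \<alpha> x)"
    by (rule integrable_dominated_convergence2[OF fm sm wi lim bound])
  show "(\<lambda>i. LINT x|lborel. u x * dR (real (Suc i)) h \<alpha> x) \<longlonglongrightarrow> (LINT x|lborel. indicator {\<alpha>..\<alpha>+h} x * u x / h)"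
    by (rule integral_dominated_convergence[OF fm sm wi lim bound])
qed



lemma K3:
  assumes Lu: "L2 u" and Lg: "L2 g" and W: "weak_deriv u g" and ab: "a \<le> b" and h: "0 < h" "h \<le> 1"
  shows "\<bar>(LINT x|lborel. indicator {a..a+h} x * u x / h) - (LINT x|lborel. indicator {b..b+h} x * u x / h)\<bar>
         \<le> (LINT x|lborel. indicator {a..b+2} x * \<bar>g x\<bar>)"
proof -
  define C where "C = (LINT x|lborel. indicator {a..b+2} x * \<bar>g x\<bar>)"
  define \<phi> where "\<phi> i x = R (real (Suc i)) h a x - R (real (Suc i)) h b x" for i x
  have gm[measurable]: "g \<in> borel_measurable lborel" using Lg by (simp add: L2_def)
  have step: "\<bar>(LINT x|lborel. u x * dR (real (Suc i)) h a x) - (LINT x|lborel. u x * dR (real (Suc i)) h b x)\<bar> \<le> C" for i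
  proof -
    let ?N = "real (Suc i)"
    have N: "?N > 0" "1 / ?N \<le> 1" by auto
    have smphi: "sm (\<phi> i)" unfolding \<phi>_def[abs_def] by (intro sm_diff sm_R)
    have Dphi: "DERIV (\<phi> i) x :> dR ?N h a x - dR ?N h b x" for x
      unfolding \<phi>_def[abs_def] by (intro DERIV_diff R_deriv N h)
    have phib: "\<bar>\<phi> i x\<bar> \<le> 1" for x
      using R_bounds[OF N(1) h(1), of a x] R_bounds[OF N(1) h(1), of b x] by (simp add: \<phi>_def)
    have phi0: "\<phi> i x = 0" if "x < a \<or> x > b + 2" for x
      using that
    proof
      assume "x < a"
      then show ?thesis using R_left[OF N(1) h(1), of x a] R_left[OF N(1) h(1), of x b] ab by (simp add: \<phi>_def)
    next
      assume "x > b + 2"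
      then have "x \<ge> b + h + 1 / ?N" "x \<ge> a + h + 1 / ?N" using N h ab by linarith+
      then show ?thesis using R_right[OF N(1) h(1), of b x] R_right[OF N(1) h(1), of a x] by (simp add: \<phi>_def)
    qed
    have tf: "test_fun (\<phi> i)"
      unfolding test_fun_def
    proof
      show "\<forall>n x. (deriv ^^ n) (\<phi> i) differentiable at x" using smphi by (simp add: sm_def)
      show "\<exists>R. \<forall>x. R < \<bar>x\<bar> \<longrightarrow> \<phi> i x = 0"
      proof (intro exI allI impI)
        fix x assume "\<bar>a\<bar> + \<bar>b\<bar> + 2 < \<bar>x\<bar>"
        then have "x < a \<or> x > b + 2" by linarith
        then show "\<phi> i x = 0" by (rule phi0)
      qed
    qed
    have dphi: "deriv (\<phi> i) x = dR ?N h a x - dR ?N h b x" for x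
      by (rule DERIV_imp_deriv[OF Dphi])
    have wd: "(LINT x|lborel. u x * deriv (\<phi> i) x) = - (LINT x|lborel. g x * \<phi> i x)"
      using W tf by (simp add: weak_deriv_def)
    have "(LINT x|lborel. u x * deriv (\<phi> i) x)
          = (LINT x|lborel. u x * dR ?N h a x) - (LINT x|lborel. u x * dR ?N h b x)"
      unfolding dphi right_diff_distrib
      by (rule Bochner_Integration.integral_diff) (rule lim_u(1)[OF Lu h]; fail)+
    moreover have "\<bar>LINT x|lborel. g x * \<phi> i x\<bar> \<le> C"
      unfolding C_def
    proof (rule integral_abs_bound_integral)
      have pm: "\<phi> i \<in> borel_measurable lborel" by (rule cont_meas[OF sm_cont[OF smphi]])
      show bi: "integrable lborel (\<lambda>x. indicator {a..b+2} x * \<bar>g x\<bar>)" by (rule L2_loc_abs[OF Lg])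
      have bd: "\<bar>g x * \<phi> i x\<bar> \<le> indicator {a..b+2} x * \<bar>g x\<bar>" for x
      proof (cases "x \<in> {a..b+2}")
        case True
        have "\<bar>g x\<bar> * \<bar>\<phi> i x\<bar> \<le> \<bar>g x\<bar> * 1" by (intro mult_left_mono phib) simp
        then show ?thesis using True by (simp add: abs_mult)
      next
        case False
        then have "x < a \<or> x > b + 2" by auto
        then show ?thesis using False phi0 by simp
      qed
      show "integrable lborel (\<lambda>x. g x * \<phi> i x)"
        by (rule Bochner_Integration.integrable_bound[OF bi]) (use pm bd in auto)
      show "\<And>x. x \<in> space lborel \<Longrightarrow> \<bar>g x * \<phi> i x\<bar> \<le> indicator {a..b+2} x * \<bar>g x\<bar>"
        by (rule bd)
    qed
    ultimately show ?thesis using wd by simp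
  qed
  have "(\<lambda>i. \<bar>(LINT x|lborel. u x * dR (real (Suc i)) h a x) - (LINT x|lborel. u x * dR (real (Suc i)) h b x)\<bar>)
     \<longlonglongrightarrow> \<bar>(LINT x|lborel. indicator {a..a+h} x * u x / h) - (LINT x|lborel. indicator {b..b+h} x * u x / h)\<bar>"
    by (intro tendsto_rabs tendsto_diff lim_u(2)[OF Lu h])
  then show ?thesis
    by (rule LIMSEQ_le_const2) (use step C_def in auto)
qed



lemma setint_eq:
  assumes "L2 u"
  shows "(LINT y|lborel. indicator {c..d} y * u y / h) = integral {c..d} u / h"
proof -
  have si: "set_integrable lborel {c..d} u"
    unfolding set_integrable_def using L2_loc[OF assms, of c d] by simp
  have "(LINT y|lborel. indicator {c..d} y * u y) = integral {c..d} u"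
    using set_borel_integral_eq_integral(2)[OF si] by (simp add: set_lebesgue_integral_def)
  then show ?thesis by simp
qed

lemma HK_avg:
  assumes "L2 u"
  obtains N where "negligible N"
    "\<And>x e. x \<notin> N \<Longrightarrow> 0 < e \<Longrightarrow> \<exists>d>0. \<forall>h. 0 < h \<and> h < d \<longrightarrow>
        \<bar>(LINT y|lborel. indicator {x..x+h} y * u y / h) - u x\<bar> < e"
proof -
  have int: "u integrable_on cbox c d" for c d :: real
  proof -
    have si: "set_integrable lborel {c..d} u"
      unfolding set_integrable_def using L2_loc[OF assms, of c d] by simp
    show ?thesis using set_borel_integral_eq_integral(1)[OF si] by (simp add: cbox_interval)
  qed
  obtain N where N: "negligible N"
    "\<And>x e. \<lbrakk>x \<notin> N; 0 < e\<rbrakk> \<Longrightarrow> \<exists>d>0. \<forall>h. 0 < h \<and> h < d \<longrightarrow>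
         norm (integral (cbox x (x + h *\<^sub>R One)) u /\<^sub>R h ^ DIM(real) - u x) < e"
    using integrable_ccontinuous_explicit[of u] int by metis
  show ?thesis
  proof (rule that[OF N(1)])
    fix x e assume "x \<notin> N" "0 < (e::real)"
    from N(2)[OF this] obtain d where d: "d > 0" "\<forall>h. 0 < h \<and> h < d \<longrightarrow>
         norm (integral (cbox x (x + h *\<^sub>R One)) u /\<^sub>R h ^ DIM(real) - u x) < e" by blast
    show "\<exists>d>0. \<forall>h. 0 < h \<and> h < d \<longrightarrow> \<bar>(LINT y|lborel. indicator {x..x+h} y * u y / h) - u x\<bar> < e"
    proof (intro exI conjI allI impI)
      fix h assume h: "0 < h \<and> h < d"
      then have "norm (integral (cbox x (x + h *\<^sub>R One)) u /\<^sub>R h ^ DIM(real) - u x) < e" using d by blast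
      then have "\<bar>integral {x..x+h} u / h - u x\<bar> < e"
        by (simp add: cbox_interval divide_inverse mult.commute)
      then show "\<bar>(LINT y|lborel. indicator {x..x+h} y * u y / h) - u x\<bar> < e"
        unfolding setint_eq[OF assms] .
    qed (rule d(1))
  qed
qed

lemma K5:
  assumes Lu: "L2 u" and Lg: "L2 g" and W: "weak_deriv u g"
  obtains N where "negligible N"
    "\<And>a b. a \<notin> N \<Longrightarrow> b \<notin> N \<Longrightarrow> a \<le> b \<Longrightarrow> \<bar>u a - u b\<bar> \<le> (LINT x|lborel. indicator {a..b+2} x * \<bar>g x\<bar>)"
proof -
  obtain N where N: "negligible N"
    "\<And>x e. x \<notin> N \<Longrightarrow> 0 < e \<Longrightarrow> \<exists>d>0. \<forall>h. 0 < h \<and> h < d \<longrightarrow>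
        \<bar>(LINT y|lborel. indicator {x..x+h} y * u y / h) - u x\<bar> < e"
    using HK_avg[OF Lu] by blast
  show ?thesis
  proof (rule that[OF N(1)])
    fix a b assume ab: "a \<notin> N" "b \<notin> N" "a \<le> b"
    let ?C = "LINT x|lborel. indicator {a..b+2} x * \<bar>g x\<bar>"
    show "\<bar>u a - u b\<bar> \<le> ?C"
    proof (rule field_le_epsilon)
      fix e :: real assume e: "0 < e"
      then have e2: "0 < e / 2" by simp
      obtain d1 where d1: "d1 > 0" "\<forall>h. 0 < h \<and> h < d1 \<longrightarrow>
        \<bar>(LINT y|lborel. indicator {a..a+h} y * u y / h) - u a\<bar> < e / 2"
        using N(2)[OF ab(1) e2] by blast
      obtain d2 where d2: "d2 > 0" "\<forall>h. 0 < h \<and> h < d2 \<longrightarrow>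
        \<bar>(LINT y|lborel. indicator {b..b+h} y * u y / h) - u b\<bar> < e / 2"
        using N(2)[OF ab(2) e2] by blast
      define h where "h = min 1 (min d1 d2) / 2"
      have h: "0 < h" "h \<le> 1" "h < d1" "h < d2" using d1 d2 by (auto simp: h_def)
      have 1: "\<bar>(LINT y|lborel. indicator {a..a+h} y * u y / h) - u a\<bar> < e / 2" using d1 h by blast
      have 2: "\<bar>(LINT y|lborel. indicator {b..b+h} y * u y / h) - u b\<bar> < e / 2" using d2 h by blast
      have 3: "\<bar>(LINT y|lborel. indicator {a..a+h} y * u y / h) - (LINT y|lborel. indicator {b..b+h} y * u y / h)\<bar> \<le> ?C"
        by (rule K3[OF Lu Lg W ab(3) h(1,2)])
      show "\<bar>u a - u b\<bar> \<le> ?C + e" using 1 2 3 by linarith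
    qed
  qed
qed



lemma amgm_int:
  assumes Lf: "L2 f" and A: "(LINT x|lborel. (f x)^2) \<le> A" and t: "t > 0" and cd: "c \<le> d"
  shows "(LINT x|lborel. indicator {c..d} x * \<bar>f x\<bar>) \<le> A / (2*t) + t * (d - c) / 2"
proof -
  have ii: "integrable lborel (indicator {c..d} :: real \<Rightarrow> real)"
  proof (rule integrable_real_indicator)
    show "emeasure lborel {c..d} < \<infinity>" using cd by (simp add: emeasure_lborel_Icc)
  qed simp
  have f2: "integrable lborel (\<lambda>x. (f x)^2)" using Lf by (simp add: L2_def)
  have ub: "integrable lborel (\<lambda>x. (f x)^2 / (2*t) + t / 2 * indicator {c..d} x)"
    by (intro Bochner_Integration.integrable_add integrable_divide integrable_mult_right f2 ii)
  have pw: "indicator {c..d} x * \<bar>f x\<bar> \<le> (f x)^2 / (2*t) + t / 2 * indicator {c..d} x" for x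
  proof (cases "x \<in> {c..d}")
    case True
    have "0 \<le> (\<bar>f x\<bar> - t)^2" by simp
    then have "2 * t * \<bar>f x\<bar> \<le> (f x)^2 + t^2" by (simp add: power2_eq_square algebra_simps)
    then have "\<bar>f x\<bar> \<le> (f x)^2 / (2*t) + t / 2" using t by (simp add: field_simps power2_eq_square)
    then show ?thesis using True by simp
  next
    case False then show ?thesis using t by simp
  qed
  have "(LINT x|lborel. indicator {c..d} x * \<bar>f x\<bar>) \<le> (LINT x|lborel. (f x)^2 / (2*t) + t / 2 * indicator {c..d} x)"
    by (rule integral_mono'[OF ub]) (use pw t in auto)
  also have "\<dots> = (LINT x|lborel. (f x)^2 / (2*t)) + (LINT x|lborel. t / 2 * indicator {c..d} x)"
    by (rule Bochner_Integration.integral_add[OF integrable_divide[OF f2] integrable_mult_right[OF ii]])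
  also have "\<dots> = (LINT x|lborel. (f x)^2) / (2*t) + t / 2 * (d - c)"
    using cd by simp
  also have "\<dots> \<le> A / (2*t) + t * (d - c) / 2"
    using A t by (simp add: divide_right_mono)
  finally show ?thesis .
qed

lemma AE_notin_negligible:
  assumes "negligible N"
  shows "AE x in lborel. x \<notin> N"
proof -
  have "N \<in> null_sets lebesgue" using assms negligible_iff_null_sets by blast
  then have "AE x in lebesgue. x \<notin> N" by (rule AE_not_in)
  then show ?thesis by (simp add: AE_completion_iff)
qed

lemma sup_bound:
  assumes Lu: "L2 u" and Lg: "L2 g" and W: "weak_deriv u g"
    and Au: "(LINT x|lborel. (u x)^2) \<le> A" and Ag: "(LINT x|lborel. (g x)^2) \<le> A" and A: "A > 0"
  shows "AE x in lborel. (u x)^2 \<le> 9 * A"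
proof -
  obtain N where N: "negligible N"
    "\<And>a b. a \<notin> N \<Longrightarrow> b \<notin> N \<Longrightarrow> a \<le> b \<Longrightarrow> \<bar>u a - u b\<bar> \<le> (LINT x|lborel. indicator {a..b+2} x * \<bar>g x\<bar>)"
    using K5[OF Lu Lg W] by blast
  have AN: "AE x in lborel. x \<notin> N" by (rule AE_notin_negligible[OF N(1)])
  define t where "t = sqrt A"
  have t: "t > 0" "A / (2 * t) = t / 2" using A by (auto simp: t_def field_simps real_sqrt_mult[symmetric])
  show ?thesis using AN
  proof eventually_elim
    case (elim x)
    define C where "C = (LINT y|lborel. indicator {x..x+3} y * \<bar>g y\<bar>)"
    have gi: "integrable lborel (\<lambda>y. indicator {x..x+3} y * \<bar>g y\<bar>)" by (rule L2_loc_abs[OF Lg])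
    have ui: "integrable lborel (\<lambda>y. indicator {x..x+1} y * \<bar>u y\<bar>)" by (rule L2_loc_abs[OF Lu])
    have ii: "integrable lborel (indicator {x..x+1} :: real \<Rightarrow> real)"
    proof (rule integrable_real_indicator)
      show "emeasure lborel {x..x+1} < \<infinity>" by (simp add: emeasure_lborel_Icc)
    qed simp
    have pw: "AE a in lborel. indicator {x..x+1} a * (\<bar>u x\<bar> - C) \<le> indicator {x..x+1} a * \<bar>u a\<bar>"
      using AN
    proof eventually_elim
      case (elim a)
      show ?case
      proof (cases "a \<in> {x..x+1}")
        case True
        have "\<bar>u x - u a\<bar> \<le> (LINT y|lborel. indicator {x..a+2} y * \<bar>g y\<bar>)"
          using N(2)[of x a] elim \<open>x \<notin> N\<close> True by simp
        also have "\<dots> \<le> C" unfolding C_def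
        proof (rule integral_mono[OF L2_loc_abs[OF Lg] gi])
          fix y show "indicator {x..a+2} y * \<bar>g y\<bar> \<le> indicator {x..x+3} y * \<bar>g y\<bar>"
            using True by (auto simp: indicator_def)
        qed
        finally show ?thesis using True by simp
      next
        case False then show ?thesis by simp
      qed
    qed
    have "(LINT a|lborel. indicator {x..x+1} a * (\<bar>u x\<bar> - C)) \<le> (LINT a|lborel. indicator {x..x+1} a * \<bar>u a\<bar>)"
      by (rule integral_mono_AE[OF integrable_mult_left[OF ii] ui pw])
    moreover have "(LINT a|lborel. indicator {x..x+1} a * (\<bar>u x\<bar> - C)) = \<bar>u x\<bar> - C"
      by simp
    moreover have "(LINT a|lborel. indicator {x..x+1} a * \<bar>u a\<bar>) \<le> A / (2*t) + t * ((x+1) - x) / 2"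
      by (rule amgm_int[OF Lu Au t(1)]) simp
    moreover have "C \<le> A / (2*t) + t * ((x+3) - x) / 2"
      unfolding C_def by (rule amgm_int[OF Lg Ag t(1)]) simp
    ultimately have "\<bar>u x\<bar> \<le> 3 * t" using t(2) by simp
    then have "\<bar>u x\<bar>^2 \<le> (3 * t)^2" by (intro power_mono) auto
    then show ?case using A by (simp add: t_def power_mult_distrib)
  qed
qed



lemma Hfun_homog:
  "Hfun k a b c d (l * u) (l * v) = l ^ (2 * k+2) * Hfun k a b c d u v"
proof -
  have e1: "(l * u) ^ (2 * k+2) = l ^ (2 * k+2) * u ^ (2 * k+2)"
    by (simp only: power_mult_distrib)
  have e1': "(l * v) ^ (2 * k+2) = l ^ (2 * k+2) * v ^ (2 * k+2)"
    by (simp only: power_mult_distrib)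
  have "(l * u * (l * v))^(k+1) = (l^2)^(k+1) * (u * v)^(k+1)"
    by (simp add: power_mult_distrib power2_eq_square mult_ac)
  moreover have kk: "2 * k + 2 = 2 * (k + 1)" by simp
  moreover have "l^(2 * k+2) = (l^2)^(k+1)" by (simp only: kk power_mult)
  ultimately have e2: "(l * u * (l * v))^(k+1) = l^(2 * k+2) * (u * v)^(k+1)"
    by simp
  have e3: "(l * u)^(k+2) * (l * v)^k = l^(2 * k+2) * (u^(k+2) * v^k)"
    by (simp add: power_mult_distrib power_add[symmetric] mult_ac mult_2_right)
  have e4: "(l * u)^k * (l * v)^(k+2) = l^(2 * k+2) * (u^k * v^(k+2))"
    by (simp add: power_mult_distrib power_add[symmetric] mult_ac mult_2_right)
  show ?thesis
    unfolding Hfun_def mult.assoc[of "c / real k"] mult.assoc[of "d / real k"] e1 e1' e2 e3 e4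
    by (simp add: algebra_simps)
qed

lemma Hfun_bound:
  assumes "a \<ge> 0" "b \<ge> 0" "c \<ge> 0" "d \<ge> 0"
  shows "\<bar>Hfun k a b c d u v\<bar> \<le> (a / (2 * real k + 2) * 2 + b / (real k + 1) + c / real k + d / real k) * (u^2 + v^2)^(k+1)"
proof -
  define s where "s = u^2 + v^2"
  have s0: "0 \<le> s" by (simp add: s_def)
  have uv: "\<bar>u * v\<bar> \<le> s"
  proof -
    have "0 \<le> (\<bar>u\<bar> - \<bar>v\<bar>)^2" by simp
    then have "2 * (\<bar>u\<bar> * \<bar>v\<bar>) \<le> u^2 + v^2" by (simp add: power2_eq_square algebra_simps)
    then show ?thesis by (simp add: s_def abs_mult) (smt (verit) zero_le_power2 mult_nonneg_nonneg abs_ge_zero)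
  qed
  have p1: "\<bar>u^(2 * k+2)\<bar> \<le> s^(k+1)"
  proof -
    have kk: "2 * k+2 = 2 * (k+1)" by simp
    have "u^(2 * k+2) = (u^2)^(k+1)" by (simp only: kk power_mult)
    then have "\<bar>u^(2 * k+2)\<bar> = (u^2)^(k+1)" by simp
    also have "\<dots> \<le> s^(k+1)" by (intro power_mono) (auto simp: s_def)
    finally show ?thesis .
  qed
  have p2: "\<bar>v^(2 * k+2)\<bar> \<le> s^(k+1)"
  proof -
    have kk: "2 * k+2 = 2 * (k+1)" by simp
    have "v^(2 * k+2) = (v^2)^(k+1)" by (simp only: kk power_mult)
    then have "\<bar>v^(2 * k+2)\<bar> = (v^2)^(k+1)" by simp
    also have "\<dots> \<le> s^(k+1)" by (intro power_mono) (auto simp: s_def)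
    finally show ?thesis .
  qed
  have p3: "\<bar>(u * v)^(k+1)\<bar> \<le> s^(k+1)"
    unfolding power_abs by (intro power_mono uv) simp
  have p4: "\<bar>u^(k+2) * v^k\<bar> \<le> s^(k+1)"
  proof -
    have "u^(k+2) * v^k = (u * v)^k * u^2"
      by (simp add: power_add power_mult_distrib mult_ac power2_eq_square)
    then have "\<bar>u^(k+2) * v^k\<bar> = \<bar>u * v\<bar>^k * u^2"
      by (simp add: abs_mult power_abs)
    also have "\<dots> \<le> s^k * s"
      by (intro mult_mono power_mono uv) (auto simp: s_def)
    finally show ?thesis by (simp add: mult.commute)
  qed
  have p5: "\<bar>u^k * v^(k+2)\<bar> \<le> s^(k+1)"
  proof -
    have "u^k * v^(k+2) = (u * v)^k * v^2"
      by (simp add: power_add power_mult_distrib mult_ac power2_eq_square)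
    then have "\<bar>u^k * v^(k+2)\<bar> = \<bar>u * v\<bar>^k * v^2"
      by (simp add: abs_mult power_abs)
    also have "\<dots> \<le> s^k * s"
      by (intro mult_mono power_mono uv) (auto simp: s_def)
    finally show ?thesis by (simp add: mult.commute)
  qed
  have t1: "\<bar>a / (2 * real k + 2) * (u ^ (2 * k+2) + v ^ (2 * k+2))\<bar> \<le> a / (2 * real k + 2) * 2 * s^(k+1)"
  proof -
    have "\<bar>u ^ (2 * k+2) + v ^ (2 * k+2)\<bar> \<le> 2 * s^(k+1)" using p1 p2 by linarith
    then have "a / (2 * real k + 2) * \<bar>u ^ (2 * k+2) + v ^ (2 * k+2)\<bar> \<le> a / (2 * real k + 2) * (2 * s^(k+1))"
      using assms by (intro mult_left_mono) auto
    then show ?thesis using assms by (simp add: abs_mult)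
  qed
  have t2: "\<bar>b / (real k + 1) * (u * v) ^ (k+1)\<bar> \<le> b / (real k + 1) * s^(k+1)"
    using mult_left_mono[OF p3, of "b / (real k + 1)"] assms by (simp add: abs_mult)
  have t3: "\<bar>c / real k * u ^ (k+2) * v ^ k\<bar> \<le> c / real k * s^(k+1)"
    using mult_left_mono[OF p4, of "c / real k"] assms by (simp add: abs_mult mult.assoc)
  have t4: "\<bar>d / real k * u ^ k * v ^ (k+2)\<bar> \<le> d / real k * s^(k+1)"
    using mult_left_mono[OF p5, of "d / real k"] assms by (simp add: abs_mult mult.assoc)
  have "\<bar>Hfun k a b c d u v\<bar> \<le> a / (2 * real k + 2) * 2 * s^(k+1) + b / (real k + 1) * s^(k+1)
      + c / real k * s^(k+1) + d / real k * s^(k+1)"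
    unfolding Hfun_def using t1 t2 t3 t4 by linarith
  then show ?thesis by (simp add: s_def algebra_simps)
qed



lemma Ifun_scale:
  "Ifun k a b c d (\<lambda>x. l * u x) (\<lambda>x. l * u' x) (\<lambda>x. l * v x) (\<lambda>x. l * v' x)
   = l^2 / 2 * H1_norm2 u u' v v' - l^(2*k+2) * (LINT x|lborel. Hfun k a b c d (u x) (v x))"
proof -
  have e1: "(\<lambda>x. (l * u x)^2 + (l * v x)^2 + (l * u' x)^2 + (l * v' x)^2)
          = (\<lambda>x. l^2 * ((u x)^2 + (v x)^2 + (u' x)^2 + (v' x)^2))"
    by (rule ext) (simp add: power_mult_distrib algebra_simps)
  have e2: "(\<lambda>x. Hfun k a b c d (l * u x) (l * v x)) = (\<lambda>x. l^(2*k+2) * Hfun k a b c d (u x) (v x))"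
    by (rule ext) (rule Hfun_homog)
  show ?thesis unfolding Ifun_def H1_norm2_def e1 e2 by simp
qed

lemma part2:
  assumes k: "k \<ge> 1" and N: "Nehari k a b c d u u' v v'"
  shows "\<forall>\<^sub>F l in at_top. Ifun k a b c d (\<lambda>x. l * u x) (\<lambda>x. l * u' x) (\<lambda>x. l * v x) (\<lambda>x. l * v' x) < 0"
proof -
  define A where "A = H1_norm2 u u' v v'"
  define B where "B = (LINT x|lborel. Hfun k a b c d (u x) (v x))"
  have H: "H1 u u'" "H1 v v'" and nz: "\<not> (AE x in lborel. u x = 0 \<and> v x = 0)"
    and D: "((\<lambda>t. Ifun k a b c d (\<lambda>x. u x + t * u x) (\<lambda>x. u' x + t * u' x)
                          (\<lambda>x. v x + t * v x) (\<lambda>x. v' x + t * v' x)) has_real_derivative 0) (at 0)"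
    using N by (auto simp: Nehari_def)
  have fe: "(\<lambda>t. Ifun k a b c d (\<lambda>x. u x + t * u x) (\<lambda>x. u' x + t * u' x)
                          (\<lambda>x. v x + t * v x) (\<lambda>x. v' x + t * v' x))
        = (\<lambda>t. (1 + t)^2 / 2 * A - (1 + t)^(2*k+2) * B)"
  proof (rule ext)
    fix t
    have "\<And>f :: real \<Rightarrow> real. (\<lambda>x. f x + t * f x) = (\<lambda>x. (1 + t) * f x)"
      by (rule ext) (simp add: algebra_simps)
    then show "Ifun k a b c d (\<lambda>x. u x + t * u x) (\<lambda>x. u' x + t * u' x)
                          (\<lambda>x. v x + t * v x) (\<lambda>x. v' x + t * v' x) = (1 + t)^2 / 2 * A - (1 + t)^(2*k+2) * B"
      by (simp only: Ifun_scale A_def B_def)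
  qed
  have D2: "((\<lambda>t. (1 + t)^2 / 2 * A - (1 + t)^(2*k+2) * B) has_real_derivative A - real (2*k+2) * B) (at 0)"
    by (auto intro!: derivative_eq_intros simp: power2_eq_square)
  have AB: "A - real (2*k+2) * B = 0"
    using DERIV_unique[OF D2] D unfolding fe by simp
  have L: "L2 u" "L2 v" "L2 u'" "L2 v'" using H by (auto simp: H1_def)
  define Q where "Q x = (u x)^2 + (v x)^2 + (u' x)^2 + (v' x)^2" for x
  have Qi: "integrable lborel Q"
    unfolding Q_def[abs_def] using L by (intro Bochner_Integration.integrable_add) (auto simp: L2_def)
  have Qn: "\<And>x. 0 \<le> Q x" by (simp add: Q_def)
  have A0: "A \<ge> 0" unfolding A_def H1_norm2_def using Qn by (simp add: Q_def)
  have Apos: "A > 0"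
  proof (rule ccontr)
    assume "\<not> A > 0"
    then have "A = 0" using A0 by linarith
    then have "integral\<^sup>L lborel Q = 0" by (simp add: A_def H1_norm2_def Q_def[abs_def])
    then have "AE x in lborel. Q x = 0"
      using integral_nonneg_eq_0_iff_AE[OF Qi] Qn by simp
    then have "AE x in lborel. u x = 0 \<and> v x = 0"
    proof eventually_elim
      case (elim x)
      then have "(u x)^2 + (v x)^2 + (u' x)^2 + (v' x)^2 = 0" by (simp add: Q_def)
      then show ?case by (simp add: add_nonneg_eq_0_iff)
    qed
    then show False using nz by simp
  qed
  have Bv: "B = A / real (2*k+2)" using AB by (simp add: field_simps)
  show ?thesis
  proof (rule eventually_mono[OF eventually_ge_at_top[of "real k + 2"]])
    fix l :: real assume l: "real k + 2 \<le> l"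
    have l1: "1 \<le> l" using l by simp
    have "l^1 \<le> l^(2*k)" by (rule power_increasing) (use k l1 in auto)
    then have "real k + 1 < l^(2*k)" using l by simp
    then have "(real k + 1) * l^2 < l^(2*k) * l^2" using l1 by (intro mult_strict_right_mono) auto
    also have "\<dots> = l^(2*k+2)" by (simp add: power_add power2_eq_square)
    finally have "(real k + 1) * l^2 < l^(2*k+2)" .
    then have "A / real (2*k+2) * ((real k + 1) * l^2) < A / real (2*k+2) * l^(2*k+2)"
      using Apos by (intro mult_strict_left_mono) auto
    moreover have "A / real (2*k+2) * ((real k + 1) * l^2) = l^2 / 2 * A" by (simp add: field_simps)
    ultimately have "l^2 / 2 * A - l^(2*k+2) * B < 0" using Bv by (simp add: mult.commute)
    then show "Ifun k a b c d (\<lambda>x. l * u x) (\<lambda>x. l * u' x) (\<lambda>x. l * v x) (\<lambda>x. l * v' x) < 0"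
      by (simp add: Ifun_scale A_def B_def)
  qed
qed



lemma part1:
  fixes k :: nat and a b c d :: real
  assumes k: "k \<ge> 1" and pos: "a \<ge> 0" "b \<ge> 0" "c \<ge> 0" "d \<ge> 0"
  shows "\<exists>r>0. \<forall>u u' v v'. H1 u u' \<longrightarrow> H1 v v' \<longrightarrow>
              0 < H1_norm2 u u' v v' \<longrightarrow> sqrt (H1_norm2 u u' v v') < r \<longrightarrow>
              Ifun k a b c d u u' v v' > Ifun k a b c d (\<lambda>_. 0) (\<lambda>_. 0) (\<lambda>_. 0) (\<lambda>_. 0)"
proof -
  define M where "M = a / (2 * real k + 2) * 2 + b / (real k + 1) + c / real k + d / real k"
  have M0: "M \<ge> 0" using pos by (simp add: M_def)
  define K where "K = M * 18^k"
  have K0: "K \<ge> 0" using M0 by (simp add: K_def)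
  define r where "r = 1 / (2 * K + 1)"
  have r: "r > 0" "r \<le> 1" "K * r < 1/2" using K0 by (auto simp: r_def field_simps)
  have I0: "Ifun k a b c d (\<lambda>_. 0) (\<lambda>_. 0) (\<lambda>_. 0) (\<lambda>_. 0) = 0"
    using k by (simp add: Ifun_def Hfun_def)
  show ?thesis
  proof (intro exI[of _ r] conjI allI impI)
    show "r > 0" by (rule r(1))
    fix u u' v v'
    assume H: "H1 u u'" "H1 v v'" and Apos: "0 < H1_norm2 u u' v v'" and Ar: "sqrt (H1_norm2 u u' v v') < r"
    define A where "A = H1_norm2 u u' v v'"
    have A: "A > 0" using Apos by (simp add: A_def)
    have L: "L2 u" "L2 v" "L2 u'" "L2 v'" using H by (auto simp: H1_def)
    have W: "weak_deriv u u'" "weak_deriv v v'" using H by (auto simp: H1_def)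
    have i2: "integrable lborel (\<lambda>x. (f x)^2)" if "L2 f" for f using that by (simp add: L2_def)
    have Asplit: "A = (LINT x|lborel. (u x)^2) + (LINT x|lborel. (v x)^2) + (LINT x|lborel. (u' x)^2) + (LINT x|lborel. (v' x)^2)"
      unfolding A_def H1_norm2_def
      by (subst Bochner_Integration.integral_add, (intro Bochner_Integration.integrable_add i2 L)+)+ simp
    have n: "0 \<le> (LINT x|lborel. (f x)^2)" for f :: "real \<Rightarrow> real" by simp
    have Au: "(LINT x|lborel. (u x)^2) \<le> A" "(LINT x|lborel. (u' x)^2) \<le> A"
      "(LINT x|lborel. (v x)^2) \<le> A" "(LINT x|lborel. (v' x)^2) \<le> A"
      and Auv: "(LINT x|lborel. (u x)^2) + (LINT x|lborel. (v x)^2) \<le> A"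
      using Asplit n[of u] n[of v] n[of u'] n[of v'] by linarith+
    have bu: "AE x in lborel. (u x)^2 \<le> 9 * A" by (rule sup_bound[OF L(1) L(3) W(1) Au(1) Au(2) A])
    have bv: "AE x in lborel. (v x)^2 \<le> 9 * A" by (rule sup_bound[OF L(2) L(4) W(2) Au(3) Au(4) A])
    have "sqrt A < r" using Ar by (simp add: A_def)
    then have "(sqrt A)^2 < r^2" using A by (intro power_strict_mono) auto
    then have "A < r^2" using A by simp
    also have "r^2 \<le> r" using r by (simp add: power2_eq_square mult_left_le)
    finally have Ar': "A < r" .
    have Ak: "A^k \<le> A"
      using power_decreasing[of 1 k A] k A Ar' r(2) by simp
    have KA: "K * A^k < 1/2"
    proof -
      have "K * A^k \<le> K * r" using Ak Ar' K0 by (intro mult_left_mono) auto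
      then show ?thesis using r(3) by linarith
    qed
    define f where "f x = K * A^k * ((u x)^2 + (v x)^2)" for x
    have fi: "integrable lborel f"
      unfolding f_def by (intro integrable_mult_right Bochner_Integration.integrable_add i2 L)
    have fle: "AE x in lborel. Hfun k a b c d (u x) (v x) \<le> f x"
      using bu bv
    proof eventually_elim
      case (elim x)
      define s where "s = (u x)^2 + (v x)^2"
      have s: "0 \<le> s" "s \<le> 18 * A" using elim by (auto simp: s_def)
      have "Hfun k a b c d (u x) (v x) \<le> M * s^(k+1)"
        using Hfun_bound[OF pos, of k "u x" "v x"] by (simp add: M_def s_def)
      also have "\<dots> = M * (s^k * s)" by simp
      also have "\<dots> \<le> M * ((18 * A)^k * s)"
        by (intro mult_left_mono mult_right_mono power_mono M0 s) 
      also have "\<dots> = f x" by (simp add: f_def K_def s_def power_mult_distrib)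
      finally show ?case .
    qed
    have f0: "AE x in lborel. 0 \<le> f x"
      using K0 A by (auto simp: f_def)
    have "(LINT x|lborel. Hfun k a b c d (u x) (v x)) \<le> (LINT x|lborel. f x)"
      by (rule integral_mono_AE'[OF fi fle f0])
    also have "(LINT x|lborel. f x) = K * A^k * ((LINT x|lborel. (u x)^2) + (LINT x|lborel. (v x)^2))"
      unfolding f_def by (simp add: Bochner_Integration.integral_add[OF i2[OF L(1)] i2[OF L(2)]])
    also have "\<dots> \<le> K * A^k * A"
      using Auv K0 A by (intro mult_left_mono) auto
    also have "\<dots> < 1/2 * A" using KA A by (intro mult_strict_right_mono) auto
    finally have "(LINT x|lborel. Hfun k a b c d (u x) (v x)) < 1/2 * A" .
    moreover have "Ifun k a b c d u u' v v' = 1/2 * A - (LINT x|lborel. Hfun k a b c d (u x) (v x))"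
      by (simp add: Ifun_def A_def H1_norm2_def)
    ultimately show "Ifun k a b c d u u' v v' > Ifun k a b c d (\<lambda>_. 0) (\<lambda>_. 0) (\<lambda>_. 0) (\<lambda>_. 0)"
      using I0 by simp
  qed
qed

theorem lemma3p15:
  fixes k :: nat and a b c d :: real
  assumes "k \<ge> 1" and "a \<ge> 0" and "b \<ge> 0" and "c \<ge> 0" and "d \<ge> 0"
  shows "(\<exists>r>0. \<forall>u u' v v'. H1 u u' \<longrightarrow> H1 v v' \<longrightarrow>
              0 < H1_norm2 u u' v v' \<longrightarrow> sqrt (H1_norm2 u u' v v') < r \<longrightarrow>
              Ifun k a b c d u u' v v' > Ifun k a b c d (\<lambda>_. 0) (\<lambda>_. 0) (\<lambda>_. 0) (\<lambda>_. 0))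
       \<and> (\<forall>u u' v v'. Nehari k a b c d u u' v v' \<longrightarrow>
              (\<forall>\<^sub>F l in at_top. Ifun k a b c d (\<lambda>x. l * u x) (\<lambda>x. l * u' x)
                                        (\<lambda>x. l * v x) (\<lambda>x. l * v' x) < 0))"
  using part1[OF assms] part2[OF assms(1)] by blast

end
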